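(* Let $c=(L,A)$ be a layered architecture configuration. Then semantic dependency is contained in the reflexive-transitive closure of syntactic dependency: for all $l,l'\in L$, if $l\rightsquigarrow_c l'$ then $l\to_c^* l'$.
   Context: Fix a set $\mathtt{SERVICE}$ of services and a set $\mathtt{PORT}$ of ports with $\mathit{type}\colon\mathtt{PORT}\to\mathcal{P}(\mathtt{SERVICE})$ and a partition $\mathtt{PORT}=\mathcal{I}\cup\mathcal{O}$ (disjoint) into input and output ports. For $P\subseteq\mathtt{PORT}$, $\overline{P}=\prod_{p\in P}\mathit{type}(p)$ (valuations of $P$); for a function $g$ and a set $Z$, $g|_Z$ is the restriction of $g$ to $\mathrm{dom}(g)\cap Z$. A layer is $l=(I_l,O_l,f_l)$ with $I_l\subseteq\mathcal{I}$, $O_l\subseteq\mathcal{O}$, $f_l\colon\overline{I_l}\to\mathcal{P}(\overline{O_l})$. A layered architecture configuration is $c=(L,A)$ with $L$ a set of layers and $A$ a partial map from $\bigcup_{l\in L}I_l$ to $\bigcup_{l\in L}O_l$ such that distinct layers share no ports and $\mathit{type}(A(i))\subseteq\mathit{type}(i)$ whenever $A(i)$ is defined. Let $\mathrm{Ports}(c)$, $\mathrm{In}(c)=\bigcup_l I_l$, $\mathrm{Out}(c)=\bigcup_l O_l$ be the sets of all, input, output ports of $c$, and $\mathrm{OpenIn}(c)=\mathrm{In}(c)\setminus\mathrm{dom}(A)$ the open input ports. $\pi_c(p)$ is the unique layer of $L$ owning port $p$. The attachment-closure $O_l^*$ of $l\in L$ is the smallest $P\subseteq\mathrm{Ports}(c)$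 with $O_l\subseteq P$, closed under ($i\in P$, $A(i)=o$ $\Rightarrow$ $o\in P$) and ($o\in\mathrm{Out}(c)\cap P\Rightarrow I_{\pi_c(o)}\subseteq P$). The configuration semantics of $l\in L$ is the map $[\![c]\!]_l\colon\overline{\mathrm{OpenIn}(c)}\to\mathcal{P}(\overline{O_l})$ with $[\![c]\!]_l(\mu)$ the set of all $\nu|_{O_l}$ where $\nu\in\overline{O_l^*}$ satisfies: (a) $\mu|_{O_l^*}=\nu|_{\mathrm{OpenIn}(c)}$; (b) $\nu(i)=\nu(A(i))$ for every input port $i\in O_l^*$ with $A(i)$ defined; (c) for every $o\in\mathrm{Out}(c)\cap O_l^*$, with $r=\pi_c(o)$, there is $\xi\in f_r(\nu|_{I_r})$ with $\xi|_{O_l^*}=\nu|_{O_r}$. For $f\colon\overline{I_l}\to\mathcal{P}(\overline{O_l})$ let $l[f]=(I_l,O_l,f)$ and $c[l:=f]=((L\setminus\{l\})\cup\{l[f]\},A)$. Syntactic dependency: $l\to_c l'$ iff there are $o\in O_l$, $i\in I_{l'}$ with $A(i)=o$; $\to_c^*$ is its reflexive-transitive closure. Semantic dependency $\rightsquigarrow_c\subseteq L\times L$: $l\rightsquigarrow_c l$ iff there is $f\colon\overline{I_l}\to\mathcal{P}(\overline{O_l})$ with $[\![c]\!]_l\neq[\![c[l:=f]]\!]_{l[f]}$; for $l\neq l'$, $l\rightsquigarrow_c l'$ iff there is $f\colon\overline{I_l}\to\mathcal{P}(\overline{O_l})$ with $[\![c]\!]_{l'}\neq[\![c[l:=f]]\!]_{l'}$.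 *)

theory Defs
  imports Main
begin

text \<open>Ports have type 'p (the set PORT), services type 's (the set SERVICE).\<close>

definition vals :: "('p \<Rightarrow> 's set) \<Rightarrow> 'p set \<Rightarrow> ('p \<rightharpoonup> 's) set" where
  "vals tp P = {\<mu>. dom \<mu> = P \<and> (\<forall>p s. \<mu> p = Some s \<longrightarrow> s \<in> tp p)}"

type_synonym ('p, 's) layer = "'p set \<times> 'p set \<times> (('p \<rightharpoonup> 's) \<Rightarrow> ('p \<rightharpoonup> 's) set)"
type_synonym ('p, 's) config = "('p, 's) layer set \<times> ('p \<rightharpoonup> 'p)"

definition lin :: "('p, 's) layer \<Rightarrow> 'p set" where "lin l = fst l"
definition lout :: "('p, 's) layer \<Rightarrow> 'p set" where "lout l = fst (snd l)"
definition lfun :: "('p, 's) layer \<Rightarrow> (('p \<rightharpoonup> 's) \<Rightarrow> ('p \<rightharpoonup> 's) set)" where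
  "lfun l = snd (snd l)"

definition is_lfun :: "('p \<Rightarrow> 's set) \<Rightarrow> 'p set \<Rightarrow> 'p set
    \<Rightarrow> (('p \<rightharpoonup> 's) \<Rightarrow> ('p \<rightharpoonup> 's) set) \<Rightarrow> bool" where
  "is_lfun tp I Op f \<longleftrightarrow> (\<forall>\<mu>. (\<mu> \<in> vals tp I \<longrightarrow> f \<mu> \<subseteq> vals tp Op) \<and> (\<mu> \<notin> vals tp I \<longrightarrow> f \<mu> = {}))"

definition is_layer :: "('p \<Rightarrow> 's set) \<Rightarrow> 'p set \<Rightarrow> 'p set \<Rightarrow> ('p, 's) layer \<Rightarrow> bool" where
  "is_layer tp Inp Outp l \<longleftrightarrow> lin l \<subseteq> Inp \<and> lout l \<subseteq> Outp \<and> is_lfun tp (lin l) (lout l) (lfun l)"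

definition layers :: "('p, 's) config \<Rightarrow> ('p, 's) layer set" where "layers c = fst c"
definition att :: "('p, 's) config \<Rightarrow> ('p \<rightharpoonup> 'p)" where "att c = snd c"

definition InC :: "('p, 's) config \<Rightarrow> 'p set" where "InC c = (\<Union>l\<in>layers c. lin l)"
definition OutC :: "('p, 's) config \<Rightarrow> 'p set" where "OutC c = (\<Union>l\<in>layers c. lout l)"
definition PortsC :: "('p, 's) config \<Rightarrow> 'p set" where "PortsC c = InC c \<union> OutC c"
definition OpenIn :: "('p, 's) config \<Rightarrow> 'p set" where "OpenIn c = InC c - dom (att c)"

definition is_config :: "('p \<Rightarrow> 's set) \<Rightarrow> 'p set \<Rightarrow> 'p set \<Rightarrow> ('p, 's) config \<Rightarrow> bool" where
  "is_config tp Inp Outp c \<longleftrightarrow>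
     (\<forall>l\<in>layers c. is_layer tp Inp Outp l) \<and>
     dom (att c) \<subseteq> InC c \<and> ran (att c) \<subseteq> OutC c \<and>
     (\<forall>l\<in>layers c. \<forall>l'\<in>layers c. l \<noteq> l' \<longrightarrow>
        (lin l \<union> lout l) \<inter> (lin l' \<union> lout l') = {}) \<and>
     (\<forall>i q. att c i = Some q \<longrightarrow> tp q \<subseteq> tp i)"

definition owner :: "('p, 's) config \<Rightarrow> 'p \<Rightarrow> ('p, 's) layer" where
  "owner c p = (THE l. l \<in> layers c \<and> p \<in> lin l \<union> lout l)"

definition att_closed :: "('p, 's) config \<Rightarrow> ('p, 's) layer \<Rightarrow> 'p set \<Rightarrow> bool" where
  "att_closed c l P \<longleftrightarrow> P \<subseteq> PortsC c \<and> lout l \<subseteq> P \<and>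
     (\<forall>i q. i \<in> P \<longrightarrow> att c i = Some q \<longrightarrow> q \<in> P) \<and>
     (\<forall>q \<in> OutC c \<inter> P. lin (owner c q) \<subseteq> P)"

definition att_closure :: "('p, 's) config \<Rightarrow> ('p, 's) layer \<Rightarrow> 'p set" where
  "att_closure c l = \<Inter> {P. att_closed c l P}"

definition sem :: "('p \<Rightarrow> 's set) \<Rightarrow> ('p, 's) config \<Rightarrow> ('p, 's) layer
    \<Rightarrow> ('p \<rightharpoonup> 's) \<Rightarrow> ('p \<rightharpoonup> 's) set" where
  "sem tp c l \<mu> = (if \<mu> \<in> vals tp (OpenIn c) then
     {\<nu> |` lout l | \<nu>. \<nu> \<in> vals tp (att_closure c l) \<and>
        \<mu> |` att_closure c l = \<nu> |` OpenIn c \<and>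
        (\<forall>i \<in> att_closure c l. i \<in> InC c \<longrightarrow> (\<forall>q. att c i = Some q \<longrightarrow> \<nu> i = \<nu> q)) \<and>
        (\<forall>q \<in> OutC c \<inter> att_closure c l.
           \<exists>\<xi> \<in> lfun (owner c q) (\<nu> |` lin (owner c q)).
              \<xi> |` att_closure c l = \<nu> |` lout (owner c q))}
   else {})"

definition lupd :: "('p, 's) layer \<Rightarrow> (('p \<rightharpoonup> 's) \<Rightarrow> ('p \<rightharpoonup> 's) set) \<Rightarrow> ('p, 's) layer" where
  "lupd l f = (lin l, lout l, f)"

definition cupd :: "('p, 's) config \<Rightarrow> ('p, 's) layer \<Rightarrow> (('p \<rightharpoonup> 's) \<Rightarrow> ('p \<rightharpoonup> 's) set)
    \<Rightarrow> ('p, 's) config" where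
  "cupd c l f = ((layers c - {l}) \<union> {lupd l f}, att c)"

definition syn_dep :: "('p, 's) config \<Rightarrow> ('p, 's) layer \<Rightarrow> ('p, 's) layer \<Rightarrow> bool" where
  "syn_dep c l l' \<longleftrightarrow> l \<in> layers c \<and> l' \<in> layers c \<and>
     (\<exists>q \<in> lout l. \<exists>i \<in> lin l'. att c i = Some q)"

definition sem_dep :: "('p \<Rightarrow> 's set) \<Rightarrow> ('p, 's) config \<Rightarrow> ('p, 's) layer \<Rightarrow> ('p, 's) layer \<Rightarrow> bool" where
  "sem_dep tp c l l' \<longleftrightarrow> l \<in> layers c \<and> l' \<in> layers c \<and>
     (if l = l' then
        (\<exists>f. is_lfun tp (lin l) (lout l) f \<and> sem tp c l \<noteq> sem tp (cupd c l f) (lupd l f))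
      else
        (\<exists>f. is_lfun tp (lin l) (lout l) f \<and> sem tp c l' \<noteq> sem tp (cupd c l f) l'))"

end

theory Submission
  imports Defs
begin

lemma owner_eq:
  assumes "m \<in> layers c" "q \<in> lin m \<union> lout m"
    and "\<And>m'. m' \<in> layers c \<Longrightarrow> q \<in> lin m' \<union> lout m' \<Longrightarrow> m' = m"
  shows "owner c q = m"
  unfolding owner_def by (rule the_equality) (use assms in blast)+

lemma closed_inter:
  assumes "att_closed c l P" "att_closed c l S"
  shows "att_closed c l (P \<inter> S)"
  using assms unfolding att_closed_def by (simp add: le_infI1) blast

lemma closure_restrict:
  assumes "att_closed c l S"
  shows "att_closure c l = \<Inter> {P. att_closed c l P \<and> P \<subseteq> S}"
proof
  show "att_closure c l \<subseteq> \<Inter> {P. att_closed c l P \<and> P \<subseteq> S}"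
    unfolding att_closure_def by blast
  show "\<Inter> {P. att_closed c l P \<and> P \<subseteq> S} \<subseteq> att_closure c l"
  proof
    fix x assume x: "x \<in> \<Inter> {P. att_closed c l P \<and> P \<subseteq> S}"
    show "x \<in> att_closure c l" unfolding att_closure_def
    proof
      fix P assume "P \<in> {P. att_closed c l P}"
      hence "att_closed c l (P \<inter> S)" using closed_inter assms by blast
      hence "x \<in> P \<inter> S" using x by blast
      thus "x \<in> P" by blast
    qed
  qed
qed

lemma closure_sub:
  assumes "att_closed c l S" shows "att_closure c l \<subseteq> S"
  using assms unfolding att_closure_def by blast

theorem mainTheorem4:
  fixes tp :: "'p \<Rightarrow> 's set" and Inp Outp :: "'p set" and c :: "('p, 's) config"
    and l l' :: "('p, 's) layer"
  assumes "Inp \<union> Outp = UNIV" and "Inp \<inter> Outp = {}"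
    and "is_config tp Inp Outp c"
    and "l \<in> layers c" and "l' \<in> layers c"
    and "sem_dep tp c l l'"
  shows "(syn_dep c)\<^sup>*\<^sup>* l l'"
proof (cases "l = l'")
  case True thus ?thesis by simp
next
  case False
  have domA: "dom (att c) \<subseteq> InC c" and ranA: "ran (att c) \<subseteq> OutC c"
    and dis0: "\<forall>l\<in>layers c. \<forall>l'\<in>layers c. l \<noteq> l' \<longrightarrow>
        (lin l \<union> lout l) \<inter> (lin l' \<union> lout l') = {}"
    using assms(3) unfolding is_config_def by auto
  have disj: "\<And>m m' q. m \<in> layers c \<Longrightarrow> m' \<in> layers c \<Longrightarrow> q \<in> lin m \<union> lout m
      \<Longrightarrow> q \<in> lin m' \<union> lout m' \<Longrightarrow> m' = m"
  proof (rule ccontr)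
    fix m m' q assume "m \<in> layers c" "m' \<in> layers c" "q \<in> lin m \<union> lout m"
      "q \<in> lin m' \<union> lout m'" "m' \<noteq> m"
    thus False using dis0 by blast
  qed
  show ?thesis
  proof (rule ccontr)
    assume nanc: "\<not> (syn_dep c)\<^sup>*\<^sup>* l l'"
    define S where "S = (\<Union>m\<in>{m. m \<in> layers c \<and> (syn_dep c)\<^sup>*\<^sup>* m l'}. lin m \<union> lout m)"
    have lS: "\<And>q. q \<in> lin l \<union> lout l \<Longrightarrow> q \<notin> S"
    proof
      fix q assume q: "q \<in> lin l \<union> lout l" "q \<in> S"
      then obtain m where m: "m \<in> layers c" "(syn_dep c)\<^sup>*\<^sup>* m l'" "q \<in> lin m \<union> lout m"
        unfolding S_def by blast
      have "l = m" using disj[OF m(1) assms(4) m(3) q(1)] .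
      thus False using nanc m(2) by simp
    qed
    have ownS: "\<And>q. q \<in> S \<Longrightarrow> \<exists>m. m \<in> layers c \<and> (syn_dep c)\<^sup>*\<^sup>* m l' \<and> q \<in> lin m \<union> lout m
        \<and> owner c q = m"
    proof -
      fix q assume "q \<in> S"
      then obtain m where m: "m \<in> layers c" "(syn_dep c)\<^sup>*\<^sup>* m l'" "q \<in> lin m \<union> lout m"
        unfolding S_def by blast
      moreover have "owner c q = m" using owner_eq[OF m(1) m(3)] disj m by blast
      ultimately show "?thesis q" by blast
    qed
    have Sclosed: "att_closed c l' S"
      unfolding att_closed_def
    proof (intro conjI allI impI ballI)
      show "S \<subseteq> PortsC c" unfolding S_def PortsC_def InC_def OutC_def by blast
      show "lout l' \<subseteq> S" unfolding S_def using assms(5) by blast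
    next
      fix i q assume i: "i \<in> S" "att c i = Some q"
      obtain m where m: "m \<in> layers c" "(syn_dep c)\<^sup>*\<^sup>* m l'" "i \<in> lin m \<union> lout m"
        using ownS[OF i(1)] by blast
      have "i \<in> InC c" using domA i(2) by blast
      then obtain m1 where m1: "m1 \<in> layers c" "i \<in> lin m1" unfolding InC_def by blast
      have "m1 = m" using disj[OF m(1) m1(1) m(3)] m1 by blast
      hence im: "i \<in> lin m" using m1 by simp
      have "q \<in> ran (att c)" using i(2) unfolding ran_def by blast
      hence "q \<in> OutC c" using ranA by blast
      then obtain m2 where m2: "m2 \<in> layers c" "q \<in> lout m2" unfolding OutC_def by blast
      have "syn_dep c m2 m" unfolding syn_dep_def using m2 m(1) im i(2) by blast
      hence "(syn_dep c)\<^sup>*\<^sup>* m2 l'" using m(2) by (meson converse_rtranclp_into_rtranclp)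
      thus "q \<in> S" unfolding S_def using m2 by blast
    next
      fix q assume q: "q \<in> OutC c \<inter> S"
      obtain m where m: "m \<in> layers c" "(syn_dep c)\<^sup>*\<^sup>* m l'" "owner c q = m"
        using ownS q by blast
      thus "lin (owner c q) \<subseteq> S" unfolding S_def by blast
    qed
    obtain f where f: "sem tp c l' \<noteq> sem tp (cupd c l f) l'"
      using assms(6) False unfolding sem_dep_def by auto
    define c' where "c' = cupd c l f"
    have lc': "layers c' = (layers c - {l}) \<union> {lupd l f}" "att c' = att c"
      unfolding c'_def cupd_def layers_def att_def by auto
    have pl: "lin (lupd l f) = lin l" "lout (lupd l f) = lout l"
      unfolding lupd_def lin_def lout_def by auto
    have InC': "InC c' = InC c" unfolding InC_def lc' pl using assms(4) pl by auto
    have OutC': "OutC c' = OutC c" unfolding OutC_def lc' pl using assms(4) pl by auto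
    have Ports': "PortsC c' = PortsC c" unfolding PortsC_def InC' OutC' ..
    have Open': "OpenIn c' = OpenIn c" unfolding OpenIn_def InC' lc' ..
    have own': "\<And>q. q \<in> S \<Longrightarrow> owner c' q = owner c q"
    proof -
      fix q assume qS: "q \<in> S"
      obtain m where m: "m \<in> layers c" "(syn_dep c)\<^sup>*\<^sup>* m l'" "q \<in> lin m \<union> lout m"
        "owner c q = m" using ownS[OF qS] by blast
      have ml: "m \<noteq> l" using m(2) nanc by blast
      have "owner c' q = m"
      proof (rule owner_eq)
        show "m \<in> layers c'" using lc' m ml by blast
        show "q \<in> lin m \<union> lout m" by fact
        fix m' assume m': "m' \<in> layers c'" "q \<in> lin m' \<union> lout m'"
        show "m' = m"
        proof (cases "m' = lupd l f")
          case True
          hence "q \<in> lin l \<union> lout l" using m' pl by simp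
          thus ?thesis using lS qS by blast
        next
          case False
          hence "m' \<in> layers c" using m' lc' by blast
          thus ?thesis using disj[OF m(1) _ m(3) m'(2)] by blast
        qed
      qed
      thus "owner c' q = owner c q" using m(4) by simp
    qed
    have cleq: "\<And>P. P \<subseteq> S \<Longrightarrow> att_closed c' l' P = att_closed c l' P"
    proof -
      fix P assume PS: "P \<subseteq> S"
      have "\<forall>q\<in>P. owner c' q = owner c q" using own' PS by blast
      thus "att_closed c' l' P = att_closed c l' P"
        unfolding att_closed_def Ports' OutC' lc'(2) by auto
    qed
    have Sclosed': "att_closed c' l' S" using cleq[of S] Sclosed by simp
    have K: "att_closure c' l' = att_closure c l'"
      unfolding closure_restrict[OF Sclosed] closure_restrict[OF Sclosed'] using cleq by metis
    have KS: "att_closure c l' \<subseteq> S" using closure_sub[OF Sclosed] .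
    have "sem tp c l' = sem tp c' l'"
    proof
      fix \<mu>
      have ow: "\<And>q. q\<in>OutC c \<inter> att_closure c l' \<Longrightarrow> owner c' q = owner c q" using own' KS by blast
      have "(\<forall>q \<in> OutC c \<inter> att_closure c l'.
           \<exists>\<xi> \<in> lfun (owner c' q) (\<nu> |` lin (owner c' q)).
              \<xi> |` att_closure c l' = \<nu> |` lout (owner c' q)) =
            (\<forall>q \<in> OutC c \<inter> att_closure c l'.
           \<exists>\<xi> \<in> lfun (owner c q) (\<nu> |` lin (owner c q)).
              \<xi> |` att_closure c l' = \<nu> |` lout (owner c q))" for \<nu>
        using ow by (metis (no_types, lifting))
      thus "sem tp c l' \<mu> = sem tp c' l' \<mu>"
        unfolding sem_def K Open' InC' OutC' lc'(2) by simp
    qed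
    thus False using f c'_def by simp
  qed
qed

end
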